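(* Let $n$ be odd and let $L=\bigoplus_{i\in\mathbb{Z}/n\mathbb{Z}}L_i$ be a $(\mathbb{Z}/n\mathbb{Z})$-graded Lie algebra over a field with $L_0=0$ that satisfies the selective metabelian condition. Let $a,b,c\in\mathbb{Z}/n\mathbb{Z}$ with the additive order of $a$ greater than $3$. Then $$\big[x_c,\,y_1,\,y_2,\,\dots,\,y_7\big]=0$$ for every $x_c\in L_c$ and all elements $y_1,\dots,y_7$ (not necessarily equal) each of the form $y_k=[v_k,w_k]$ with $v_k\in L_b$, $w_k\in L_{a-b}$.
   Context: A $(\mathbb{Z}/n\mathbb{Z})$-graded Lie algebra is $L=\bigoplus_{i=0}^{n-1}L_i$ with $[L_i,L_j]\subseteq L_{i+j \bmod n}$. Products $[y_1,\dots,y_s]$ are left-normed: $[\dots[[y_1,y_2],y_3],\dots,y_s]$. A sequence $(a_1,\dots,a_k)$ in $\mathbb{Z}/n\mathbb{Z}$ is $(-1)$-dependent if $t_1a_1+\dots+t_ka_k=0$ for some $t_i\in\{0,1\}$ not all zero, and $(-1)$-independent otherwise. $L$ satisfies the selective metabelian condition if $\big[[x_{d_1},x_{d_2}],[x_{d_3},x_{d_4}]\big]=0$ for all $x_{d_i}\in L_{d_i}$ whenever $(d_1,d_2,d_3,d_4)$ is $(-1)$-independent. *)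

theory Defs
  imports Main "HOL.Vector_Spaces"
begin

definition lie_algebra :: "('k::field \<Rightarrow> 'v::ab_group_add \<Rightarrow> 'v) \<Rightarrow> ('v \<Rightarrow> 'v \<Rightarrow> 'v) \<Rightarrow> bool" where
  "lie_algebra scale br \<longleftrightarrow>
     vector_space scale \<and>
     (\<forall>x. Vector_Spaces.linear scale scale (br x)) \<and>
     (\<forall>y. Vector_Spaces.linear scale scale (\<lambda>x. br x y)) \<and>
     (\<forall>x. br x x = 0) \<and>
     (\<forall>x y z. br x (br y z) + br y (br z x) + br z (br x y) = 0)"

text \<open>Z/nZ-grading: components G i for i in {0..<n} (residues represented by
integers 0..n-1; component of an arbitrary integer index i is G (i mod n)).\<close>
definition graded_lie_algebra ::
  "('k::field \<Rightarrow> 'v::ab_group_add \<Rightarrow> 'v) \<Rightarrow> ('v \<Rightarrow> 'v \<Rightarrow> 'v) \<Rightarrow> int \<Rightarrow> (int \<Rightarrow> 'v set) \<Rightarrow> bool" where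
  "graded_lie_algebra scale br n G \<longleftrightarrow>
     lie_algebra scale br \<and> n > 0 \<and>
     (\<forall>i\<in>{0..<n}. module.subspace scale (G i)) \<and>
     (\<forall>x. \<exists>f. (\<forall>i\<in>{0..<n}. f i \<in> G i) \<and> x = (\<Sum>i\<in>{0..<n}. f i)) \<and>
     (\<forall>f. (\<forall>i\<in>{0..<n}. f i \<in> G i) \<and> (\<Sum>i\<in>{0..<n}. f i) = 0 \<longrightarrow> (\<forall>i\<in>{0..<n}. f i = 0)) \<and>
     (\<forall>i\<in>{0..<n}. \<forall>j\<in>{0..<n}. \<forall>x\<in>G i. \<forall>y\<in>G j. br x y \<in> G ((i + j) mod n))"

definition minus1_dependent :: "int \<Rightarrow> int list \<Rightarrow> bool" where
  "minus1_dependent n ds \<longleftrightarrow>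
     (\<exists>T \<subseteq> {..<length ds}. T \<noteq> {} \<and> (\<Sum>i\<in>T. ds ! i) mod n = 0)"

definition selective_metabelian ::
  "('v::ab_group_add \<Rightarrow> 'v \<Rightarrow> 'v) \<Rightarrow> int \<Rightarrow> (int \<Rightarrow> 'v set) \<Rightarrow> bool" where
  "selective_metabelian br n G \<longleftrightarrow>
     (\<forall>d1 d2 d3 d4. \<not> minus1_dependent n [d1, d2, d3, d4] \<longrightarrow>
        (\<forall>x1\<in>G (d1 mod n). \<forall>x2\<in>G (d2 mod n). \<forall>x3\<in>G (d3 mod n). \<forall>x4\<in>G (d4 mod n).
           br (br x1 x2) (br x3 x4) = 0))"

definition add_order :: "int \<Rightarrow> int \<Rightarrow> nat" where
  "add_order n a = (LEAST k::nat. k > 0 \<and> (int k * a) mod n = 0)"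

definition left_normed :: "('v \<Rightarrow> 'v \<Rightarrow> 'v) \<Rightarrow> 'v \<Rightarrow> 'v list \<Rightarrow> 'v" where
  "left_normed br x ys = foldl br x ys"

end

theory Submission
  imports Defs "HOL.Vector_Spaces"
begin



lemma lie_addR: assumes "lie_algebra scale br" shows "br x (y + z) = br x y + br x z"
proof -
  have "Vector_Spaces.linear scale scale (br x)" using assms unfolding lie_algebra_def by blast
  then show ?thesis by (metis module_hom_iff_linear module_hom.add)
qed

lemma lie_addL: assumes "lie_algebra scale br" shows "br (y + z) x = br y x + br z x"
proof -
  have "Vector_Spaces.linear scale scale (\<lambda>y. br y x)" using assms unfolding lie_algebra_def by blast
  then show ?thesis using module_hom.add[of scale scale "\<lambda>y. br y x"] module_hom_iff_linear by metis
qed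

lemma indep4:
  fixes n d1 d2 d3 d4 :: int
  assumes "d1 mod n \<noteq> 0" "d2 mod n \<noteq> 0" "d3 mod n \<noteq> 0" "d4 mod n \<noteq> 0"
    "(d1 + d2) mod n \<noteq> 0" "(d1 + d3) mod n \<noteq> 0" "(d1 + d4) mod n \<noteq> 0"
    "(d2 + d3) mod n \<noteq> 0" "(d2 + d4) mod n \<noteq> 0" "(d3 + d4) mod n \<noteq> 0"
    "(d1 + d2 + d3) mod n \<noteq> 0" "(d1 + d2 + d4) mod n \<noteq> 0" "(d1 + d3 + d4) mod n \<noteq> 0"
    "(d2 + d3 + d4) mod n \<noteq> 0" "(d1 + d2 + d3 + d4) mod n \<noteq> 0"
  shows "\<not> minus1_dependent n [d1, d2, d3, d4]"
proof
  assume A: "minus1_dependent n [d1, d2, d3, d4]"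
  have l: "length [d1, d2, d3, d4] = 4" by simp
  from A obtain T where T: "T \<subseteq> {..<length [d1, d2, d3, d4]}" "T \<noteq> {}" "(\<Sum>i\<in>T. [d1, d2, d3, d4] ! i) mod n = 0"
    unfolding minus1_dependent_def by (elim exE conjE)
  note T = T[unfolded l]
  have "(\<Sum>i\<in>T. [d1, d2, d3, d4] ! i) = (\<Sum>i\<in>{..<4} \<inter> T. [d1, d2, d3, d4] ! i)"
    using T(1) by (simp add: Int_absorb1)
  also have "\<dots> = (\<Sum>i<4. if i \<in> T then [d1, d2, d3, d4] ! i else 0)"
    by (rule sum.inter_restrict) simp
  also have "\<dots> = (if 0 \<in> T then d1 else 0) + (if 1 \<in> T then d2 else 0) + (if 2 \<in> T then d3 else 0) + (if 3 \<in> T then d4 else 0)"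
    by (simp add: eval_nat_numeral)
  finally have S: "(\<Sum>i\<in>T. [d1, d2, d3, d4] ! i) = (if 0 \<in> T then d1 else 0) + (if 1 \<in> T then d2 else 0) + (if 2 \<in> T then d3 else 0) + (if 3 \<in> T then d4 else 0)" .
  have ne: "0 \<in> T \<or> 1 \<in> T \<or> 2 \<in> T \<or> 3 \<in> T"
  proof -
    obtain t where "t \<in> T" using T(2) by blast
    then have "t < 4" using T(1) by blast
    then have "t = 0 \<or> t = 1 \<or> t = 2 \<or> t = 3" by arith
    then show ?thesis using \<open>t \<in> T\<close> by blast
  qed
  have M: "(\<Sum>i\<in>T. [d1, d2, d3, d4] ! i) mod n = 0" by (rule T(3))
  show False
    using M ne assms unfolding S
    by (cases "0 \<in> T"; cases "1 \<in> T"; cases "2 \<in> T"; cases "3 \<in> T"; simp only: if_True if_False add_0 add_0_right; simp)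
qed



lemma lie_proj:
  assumes "lie_algebra scale br"
  shows "br x x = 0" "br x (br y z) + br y (br z x) + br z (br x y) = 0" "vector_space scale"
proof -
  have A: "vector_space scale \<and> (\<forall>x. br x x = 0) \<and> (\<forall>x y z. br x (br y z) + br y (br z x) + br z (br x y) = 0)"
    using assms unfolding lie_algebra_def by (elim conjE) (intro conjI)
  then show "br x x = 0" "br x (br y z) + br y (br z x) + br z (br x y) = 0" "vector_space scale"
    by simp_all
qed

lemma gla_proj:
  assumes "graded_lie_algebra scale br n G"
  shows "lie_algebra scale br" "n > 0" "\<forall>i\<in>{0..<n}. module.subspace scale (G i)"
    "\<forall>i\<in>{0..<n}. \<forall>j\<in>{0..<n}. \<forall>x\<in>G i. \<forall>y\<in>G j. br x y \<in> G ((i + j) mod n)"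
proof -
  note A = assms[unfolded graded_lie_algebra_def]
  show "lie_algebra scale br" by (rule conjunct1[OF A])
  show "n > 0" by (rule conjunct1[OF conjunct2[OF A]])
  show "\<forall>i\<in>{0..<n}. module.subspace scale (G i)" by (rule conjunct1[OF conjunct2[OF conjunct2[OF A]]])
  show "\<forall>i\<in>{0..<n}. \<forall>j\<in>{0..<n}. \<forall>x\<in>G i. \<forall>y\<in>G j. br x y \<in> G ((i + j) mod n)"
    by (rule conjunct2[OF conjunct2[OF conjunct2[OF conjunct2[OF conjunct2[OF A]]]]])
qed

context
  fixes scale :: "'k::field \<Rightarrow> 'v::ab_group_add \<Rightarrow> 'v" and br :: "'v \<Rightarrow> 'v \<Rightarrow> 'v"
  assumes L: "lie_algebra scale br"
begin

lemma br_0R[simp]: "br x 0 = 0"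
  using lie_addR[OF L, of x 0 0] by simp
lemma br_0L[simp]: "br 0 x = 0"
  using lie_addL[OF L, of 0 0 x] by simp
lemma br_negR: "br x (- y) = - br x y"
  using lie_addR[OF L, of x y "-y"] by (simp add: eq_neg_iff_add_eq_0 add.commute)
lemma br_negL: "br (- y) x = - br y x"
  using lie_addL[OF L, of y "-y" x] by (simp add: eq_neg_iff_add_eq_0 add.commute)
lemma br_diffL: "br (y - z) x = br y x - br z x"
  using lie_addL[OF L, of y "-z" x] br_negL by simp
lemma br_self: "br x x = 0" using lie_proj(1)[OF L] .
lemma br_anti: "br x y = - br y x"
proof -
  have "0 = br (x + y) (x + y)" by (rule br_self[symmetric])
  also have "\<dots> = br x (x + y) + br y (x + y)" by (rule lie_addL[OF L])
  also have "\<dots> = (br x x + br x y) + (br y x + br y y)" by (simp add: lie_addR[OF L])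
  also have "\<dots> = br x y + br y x" by (simp add: br_self)
  finally have "br x y + br y x = 0" by simp
  then show ?thesis by (simp add: eq_neg_iff_add_eq_0)
qed
lemma jac1: "br x (br y z) = br (br x y) z - br (br x z) y"
proof -
  have J: "br x (br y z) + br y (br z x) + br z (br x y) = 0" using lie_proj(2)[OF L] .
  have "br y (br z x) = br (br x z) y" using br_anti[of y "br z x"] br_anti[of z x] br_negL by simp
  moreover have "br z (br x y) = - br (br x y) z" by (rule br_anti)
  ultimately have "br x (br y z) + br (br x z) y - br (br x y) z = 0" using J by simp
  then show ?thesis by (simp add: algebra_simps)
qed
lemma jac2: "br (br p q) r = br (br p r) q + br p (br q r)"
  using jac1[of p q r] by simp

lemma fold_zero0: "foldl br 0 zs = 0"
  by (induction zs) simp_all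

lemma fold_zero: assumes "foldl br x (take j ys) = 0" shows "foldl br x ys = 0"
proof -
  have "foldl br x ys = foldl br (foldl br x (take j ys)) (drop j ys)"
    by (metis append_take_drop_id foldl_append)
  then show ?thesis using assms fold_zero0 by simp
qed

end

lemma fold_Suc: "j < length ys \<Longrightarrow> foldl br x (take (Suc j) ys) = br (foldl br x (take j ys)) (ys ! j)"
  by (simp add: take_Suc_conv_app_nth)

lemma grad: assumes "graded_lie_algebra scale br n G" "x \<in> G (i mod n)" "y \<in> G (j mod n)"
  shows "br x y \<in> G ((i + j) mod n)"
proof -
  have n: "n > 0" using gla_proj(2)[OF assms(1)] .
  have "\<forall>i\<in>{0..<n}. \<forall>j\<in>{0..<n}. \<forall>x\<in>G i. \<forall>y\<in>G j. br x y \<in> G ((i + j) mod n)"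
    using gla_proj(4)[OF assms(1)] .
  then have "br x y \<in> G ((i mod n + j mod n) mod n)" using assms n by simp
  then show ?thesis by (simp add: mod_add_eq)
qed

lemma grad_neg: assumes "graded_lie_algebra scale br n G" "x \<in> G (i mod n)"
  shows "- x \<in> G (i mod n)"
proof -
  have n: "n > 0" and "\<forall>i\<in>{0..<n}. module.subspace scale (G i)" and "vector_space scale"
    using gla_proj[OF assms(1)] lie_proj(3)[OF gla_proj(1)[OF assms(1)]] by blast+
  then have "module.subspace scale (G (i mod n))" by simp
  then show ?thesis using module.subspace_neg assms(2) \<open>vector_space scale\<close>
    by (metis module_iff_vector_space)
qed

lemma fold_deg: assumes "graded_lie_algebra scale br n G" "x \<in> G (c mod n)"
  "\<forall>k<length ys. ys ! k \<in> G (a mod n)"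
  shows "j \<le> length ys \<Longrightarrow> foldl br x (take j ys) \<in> G ((c + int j * a) mod n)"
proof (induction j)
  case 0
  then show ?case using assms by simp
next
  case (Suc j)
  then have "foldl br x (take (Suc j) ys) = br (foldl br x (take j ys)) (ys ! j)" 
    by (simp add: fold_Suc)
  moreover have "br (foldl br x (take j ys)) (ys ! j) \<in> G ((c + int j * a + a) mod n)"
    using grad[OF assms(1)] Suc assms(3) by simp
  ultimately show ?case by (simp add: algebra_simps)
qed

lemma sm_apply: assumes "selective_metabelian br n G" "\<not> minus1_dependent n [d1, d2, d3, d4]"
  "x1 \<in> G (d1 mod n)" "x2 \<in> G (d2 mod n)" "x3 \<in> G (d3 mod n)" "x4 \<in> G (d4 mod n)"
  shows "br (br x1 x2) (br x3 x4) = 0"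
proof -
  have "\<forall>x1\<in>G (d1 mod n). \<forall>x2\<in>G (d2 mod n). \<forall>x3\<in>G (d3 mod n). \<forall>x4\<in>G (d4 mod n).
           br (br x1 x2) (br x3 x4) = 0"
    using assms(1) assms(2) unfolding selective_metabelian_def by simp
  then show ?thesis using assms(3-6) by simp
qed

lemma ord_facts: fixes n a :: int
  assumes "odd n" "add_order n a > 3"
  shows "\<not> n dvd a" "\<not> n dvd 2*a" "\<not> n dvd 3*a" "\<not> n dvd 4*a"
proof -
  have le: "add_order n a \<le> k" if "k > 0" "(int k * a) mod n = 0" for k
    unfolding add_order_def by (rule Least_le) (use that in simp)
  show 1: "\<not> n dvd a"
  proof
    assume "n dvd a"
    then have "(int 1 * a) mod n = 0" by simp
    then have "add_order n a \<le> 1" by (rule le[rotated]) simp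
    with assms(2) show False by simp
  qed
  show 2: "\<not> n dvd 2*a"
  proof
    assume "n dvd 2*a"
    then have "(int 2 * a) mod n = 0" by simp
    then have "add_order n a \<le> 2" by (rule le[rotated]) simp
    with assms(2) show False by simp
  qed
  show 3: "\<not> n dvd 3*a"
  proof
    assume "n dvd 3*a"
    then have "(int 3 * a) mod n = 0" by simp
    then have "add_order n a \<le> 3" by (rule le[rotated]) simp
    with assms(2) show False by simp
  qed
  show "\<not> n dvd 4*a"
  proof
    assume "n dvd 4*a"
    have od: "n dvd 2*z \<Longrightarrow> n dvd z" for z
      using assms(1) coprime_dvd_mult_right_iff coprime_right_2_iff_odd by blast
    have "n dvd 2*(2*a)" using \<open>n dvd 4*a\<close> by simp
    then have "n dvd 2*a" by (rule od)
    with 2 show False by simp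
  qed
qed




lemma count5: fixes n c a :: int and fs :: "int list"
  assumes "n > 0" "length fs = 4" "\<not> n dvd a" "\<not> n dvd 2*a" "\<not> n dvd 3*a" "\<not> n dvd 4*a"
  shows "\<exists>j<5::nat. \<forall>f\<in>set fs. \<not> n dvd (c + int j * a - f)"
proof (rule ccontr)
  assume "\<not> ?thesis"
  then have H: "\<forall>j<5. \<exists>f\<in>set fs. n dvd (c + int j * a - f)" by blast
  define g where "g j = (c + int j * a) mod n" for j
  have sub: "g ` {..<5} \<subseteq> (\<lambda>f. f mod n) ` set fs"
  proof
    fix y assume "y \<in> g ` {..<5}"
    then obtain j where j: "j < 5" "y = g j" by auto
    then obtain f where "f \<in> set fs" "n dvd (c + int j * a - f)" using H by blast
    then show "y \<in> (\<lambda>f. f mod n) ` set fs" using j by (auto simp: g_def mod_eq_dvd_iff)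
  qed
  have inj: "inj_on g {..<5}"
  proof (rule inj_onI)
    fix i j assume ij: "i \<in> {..<5}" "j \<in> {..<5}" "g i = g j"
    then have "n dvd (c + int i * a) - (c + int j * a)" by (simp add: g_def mod_eq_dvd_iff)
    then have d: "n dvd (int i - int j) * a" by (simp add: algebra_simps)
    show "i = j"
    proof (rule ccontr)
      assume "i \<noteq> j"
      have K: "False" if "0 < k" "k < 5" "n dvd int k * a" for k :: nat
      proof -
        have "k = 1 \<or> k = 2 \<or> k = 3 \<or> k = 4" using that(1,2) by arith
        then show False using that(3) assms(3-6) by (elim disjE) simp_all
      qed
      show False
      proof (cases "i < j")
        case True
        have "(int i - int j) * a = - (int (j - i) * a)" using True by (simp add: of_nat_diff algebra_simps)
        then have "n dvd int (j - i) * a" using d by (metis dvd_minus_iff)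
        moreover have "0 < j - i" "j - i < 5" using True ij by auto
        ultimately show False using K by blast
      next
        case False
        have eq2: "(int i - int j) * a = int (i - j) * a" using False by (simp add: of_nat_diff)
        have "n dvd int (i - j) * a" using d unfolding eq2 .
        moreover have "0 < i - j" "i - j < 5" using False \<open>i \<noteq> j\<close> ij by auto
        ultimately show False using K by blast
      qed
    qed
  qed
  have "card (g ` {..<5}) = 5" using card_image[OF inj] by simp
  moreover have "card ((\<lambda>f. f mod n) ` set fs) \<le> 4"
    using card_image_le[of "set fs" "\<lambda>f. f mod n"] card_length[of fs] assms(2) by simp
  moreover have "card (g ` {..<5}) \<le> card ((\<lambda>f. f mod n) ` set fs)"
    by (rule card_mono[OF _ sub]) simp
  ultimately show False by simp
qed

lemma core_special:
  assumes GL: "graded_lie_algebra scale br n G" and G0: "G 0 = {0}"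
    and SM: "selective_metabelian br n G"
    and oa: "\<not> n dvd a" "\<not> n dvd 2*a" "\<not> n dvd 3*a" "\<not> n dvd 4*a"
    and h: "\<not> n dvd (d - 2*a)" "\<not> n dvd (d - a)" "\<not> n dvd d" "\<not> n dvd (d + a)"
      "\<not> n dvd (d + 2*a)" "\<not> n dvd (d + 3*a)" "\<not> n dvd (d + 4*a)"
    and z: "z \<in> G (d mod n)" and V: "V \<in> G ((-a) mod n)" "V' \<in> G ((-a) mod n)"
    and W: "W \<in> G ((2*a) mod n)" "W' \<in> G ((2*a) mod n)"
  shows "br (br z (br V W)) (br V' W') = 0"
proof -
  have L: "lie_algebra scale br" by (rule gla_proj(1)[OF GL])
  have i1: "\<not> minus1_dependent n [d + -a, 2*a, -a, 2*a]"
    by (rule indep4) (use h oa in \<open>simp_all add: algebra_simps mod_eq_0_iff_dvd\<close>)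
  have i2: "\<not> minus1_dependent n [d, 2*a, -a, 2*a]"
    by (rule indep4) (use h oa in \<open>simp_all add: algebra_simps mod_eq_0_iff_dvd\<close>)
  have P1: "br z V \<in> G ((d + -a) mod n)" by (rule grad[OF GL z V(1)])
  have t1: "br (br (br z V) W) (br V' W') = 0" by (rule sm_apply[OF SM i1 P1 W(1) V(2) W(2)])
  have t2: "br (br z W) (br V' W') = 0" by (rule sm_apply[OF SM i2 z W(1) V(2) W(2)])
  have y': "br V' W' \<in> G ((-a + 2*a) mod n)" by (rule grad[OF GL V(2) W(2)])
  have "br V (br V' W') \<in> G ((-a + (-a + 2*a)) mod n)" by (rule grad[OF GL V(1) y'])
  moreover have "(-a + (-a + 2*a)) mod n = 0" by simp
  ultimately have t3: "br V (br V' W') = 0" using G0 by simp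
  have "br (br z (br V W)) (br V' W') = br (br (br z V) W - br (br z W) V) (br V' W')"
    by (simp add: jac1[OF L])
  also have "\<dots> = br (br (br z V) W) (br V' W') - br (br (br z W) V) (br V' W')"
    by (rule br_diffL[OF L])
  also have "\<dots> = - br (br (br z W) V) (br V' W')" using t1 by simp
  also have "br (br (br z W) V) (br V' W') = br (br (br z W) (br V' W')) V + br (br z W) (br V (br V' W'))"
    by (rule jac2[OF L])
  also have "\<dots> = 0" using t2 t3 L by simp
  finally show ?thesis by simp
qed




lemma special_case:
  fixes scale :: "'k::field \<Rightarrow> 'v::ab_group_add \<Rightarrow> 'v"
    and br :: "'v \<Rightarrow> 'v \<Rightarrow> 'v"
    and n :: int and G :: "int \<Rightarrow> 'v set"
    and a b c :: int and x :: 'v and ys :: "'v list"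
  assumes "odd n"
    and GL: "graded_lie_algebra scale br n G"
    and G0: "G 0 = {0}"
    and SM: "selective_metabelian br n G"
    and "add_order n a > 3"
    and X: "x \<in> G (c mod n)"
    and len: "length ys = 7"
    and Y: "\<forall>k<7. \<exists>v w. v \<in> G (b mod n) \<and> w \<in> G ((a - b) mod n) \<and> ys ! k = br v w"
    and ab: "n dvd (a + b)"
  shows "left_normed br x ys = 0"
proof -
  have L: "lie_algebra scale br" by (rule gla_proj(1)[OF GL])
  note oa = ord_facts[OF assms(1,5)]
  have bm: "b mod n = (-a) mod n" using ab by (simp add: mod_eq_dvd_iff add.commute)
  have abm: "(a - b) mod n = (2*a) mod n"
  proof -
    have eq: "a - b - 2*a = - (a + b)" by simp
    show ?thesis unfolding mod_eq_dvd_iff eq dvd_minus_iff by (rule ab)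
  qed
  have Y2: "\<forall>k<7. \<exists>v w. v \<in> G ((-a) mod n) \<and> w \<in> G ((2*a) mod n) \<and> ys ! k = br v w"
    using Y bm abm by simp
  have yG: "\<forall>k<length ys. ys ! k \<in> G (a mod n)"
  proof (intro allI impI)
    fix k assume "k < length ys"
    then obtain v w where "v \<in> G (b mod n)" "w \<in> G ((a - b) mod n)" "ys ! k = br v w" using Y len by auto
    then show "ys ! k \<in> G (a mod n)" using grad[OF GL, of v b w "a - b"] by simp
  qed
  define z where "z j = foldl br x (take j ys)" for j
  have zdeg: "j \<le> 7 \<Longrightarrow> z j \<in> G ((c + int j * a) mod n)" for j
    unfolding z_def using fold_deg[OF GL X yG] len by simp
  have zS: "j < 7 \<Longrightarrow> z (Suc j) = br (z j) (ys ! j)" for j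
    unfolding z_def using fold_Suc[of j ys br x] len by simp
  have "\<exists>j\<le>7. z j = 0"
  proof (cases "\<exists>t\<le>6. n dvd (c + int t * a)")
    case True
    then obtain t where t: "t \<le> 6" "n dvd (c + int t * a)" by blast
    then have "z t \<in> G 0" using zdeg[of t] by (simp add: mod_eq_0_iff_dvd)
    then show ?thesis using G0 t by auto
  next
    case False
    then have h: "\<not> n dvd (c + int t * a)" if "t \<le> 6" for t using that by blast
    have "2 < (7::nat)" by simp
    from Y2[rule_format, OF this] obtain V W where VW: "V \<in> G ((-a) mod n)" "W \<in> G ((2*a) mod n)" "ys ! 2 = br V W"
      by blast
    have "3 < (7::nat)" by simp
    from Y2[rule_format, OF this] obtain V' W' where VW': "V' \<in> G ((-a) mod n)" "W' \<in> G ((2*a) mod n)" "ys ! 3 = br V' W'"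
      by blast
    have z4: "z 4 = br (br (z 2) (ys ! 2)) (ys ! 3)"
      using zS[of 3] zS[of 2] by (simp add: numeral_eq_Suc)
    have "z 2 \<in> G ((c + 2 * a) mod n)" using zdeg[of 2] by simp
    have h0: "\<not> n dvd (c + 2*a - 2*a)" using h[of 0] by simp
    have h1: "\<not> n dvd (c + 2*a - a)" using h[of 1] by (simp add: algebra_simps)
    have h2: "\<not> n dvd (c + 2*a)" using h[of 2] by (simp add: algebra_simps)
    have h3: "\<not> n dvd (c + 2*a + a)" using h[of 3] by (simp add: algebra_simps)
    have h4: "\<not> n dvd (c + 2*a + 2*a)" using h[of 4] by (simp add: algebra_simps)
    have h5: "\<not> n dvd (c + 2*a + 3*a)" using h[of 5] by (simp add: algebra_simps)
    have h6: "\<not> n dvd (c + 2*a + 4*a)" using h[of 6] by (simp add: algebra_simps)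
    have "br (br (z 2) (br V W)) (br V' W') = 0"
      by (rule core_special[OF GL G0 SM oa h0 h1 h2 h3 h4 h5 h6 \<open>z 2 \<in> G ((c + 2 * a) mod n)\<close> VW(1) VW'(1) VW(2) VW'(2)])
    then have "z 4 = 0" using z4 VW VW' by simp
    then show ?thesis by (intro exI[of _ 4]) simp
  qed
  then obtain j where "z j = 0" by blast
  then show ?thesis unfolding left_normed_def z_def by (rule fold_zero[OF L])
qed




lemma generic_case:
  fixes scale :: "'k::field \<Rightarrow> 'v::ab_group_add \<Rightarrow> 'v"
    and br :: "'v \<Rightarrow> 'v \<Rightarrow> 'v"
    and n :: int and G :: "int \<Rightarrow> 'v set"
    and a b c :: int and x :: 'v and ys :: "'v list"
  assumes "odd n"
    and GL: "graded_lie_algebra scale br n G"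
    and G0: "G 0 = {0}"
    and SM: "selective_metabelian br n G"
    and "add_order n a > 3"
    and X: "x \<in> G (c mod n)"
    and len: "length ys = 7"
    and Y: "\<forall>k<7. \<exists>v w. v \<in> G (b mod n) \<and> w \<in> G ((a - b) mod n) \<and> ys ! k = br v w"
    and nb: "\<not> n dvd b" "\<not> n dvd (a - b)" "\<not> n dvd (a + b)" "\<not> n dvd (2*a - b)"
  shows "left_normed br x ys = 0"
proof -
  have L: "lie_algebra scale br" by (rule gla_proj(1)[OF GL])
  have n0: "n > 0" by (rule gla_proj(2)[OF GL])
  note oa = ord_facts[OF assms(1,5)]
  have yG: "\<forall>k<length ys. ys ! k \<in> G (a mod n)"
  proof (intro allI impI)
    fix k assume "k < length ys"
    then obtain v w where "v \<in> G (b mod n)" "w \<in> G ((a - b) mod n)" "ys ! k = br v w" using Y len by auto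
    then show "ys ! k \<in> G (a mod n)" using grad[OF GL, of v b w "a - b"] by simp
  qed
  define z where "z j = foldl br x (take j ys)" for j
  have zdeg: "j \<le> 7 \<Longrightarrow> z j \<in> G ((c + int j * a) mod n)" for j
    unfolding z_def using fold_deg[OF GL X yG] len by simp
  have zS: "j < 7 \<Longrightarrow> z (Suc j) = br (z j) (ys ! j)" for j
    unfolding z_def using fold_Suc[of j ys br x] len by simp
  have zero_of: "z t = 0" if "t \<le> 7" "n dvd (c + int t * a)" for t
  proof -
    have "z t \<in> G 0" using zdeg[of t] that by (simp add: mod_eq_0_iff_dvd)
    then show ?thesis using G0 by simp
  qed
  have "length [-b, b - a, -a - b, b - 2*a] = 4" by simp
  from count5[OF n0 this oa, of c] obtain j where
    j: "j < 5" "\<forall>f\<in>set [-b, b - a, -a - b, b - 2*a]. \<not> n dvd (c + int j * a - f)" by blast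
  have f1: "\<not> n dvd (c + int j * a + b)" using j(2) by (simp add: algebra_simps)
  have f2: "\<not> n dvd (c + int j * a + a - b)" using j(2) by (simp add: algebra_simps)
  have f3: "\<not> n dvd (c + int j * a + a + b)" using j(2) by (simp add: algebra_simps)
  have f4: "\<not> n dvd (c + int j * a + 2*a - b)" using j(2) by (simp add: algebra_simps)
  have "\<exists>t\<le>7. z t = 0"
  proof (cases "n dvd (c + int j * a) \<or> n dvd (c + int (Suc j) * a) \<or> n dvd (c + int (Suc (Suc j)) * a)")
    case True
    then show ?thesis
    proof (elim disjE)
      assume "n dvd (c + int j * a)" then show ?thesis using zero_of[of j] j(1) by (intro exI[of _ j]) auto
    next
      assume "n dvd (c + int (Suc j) * a)" then show ?thesis using zero_of[of "Suc j"] j(1) by (intro exI[of _ "Suc j"]) auto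
    next
      assume "n dvd (c + int (Suc (Suc j)) * a)" then show ?thesis using zero_of[of "Suc (Suc j)"] j(1) by (intro exI[of _ "Suc (Suc j)"]) auto
    qed
  next
    case False
    have h0: "\<not> n dvd (c + int j * a)" using False by simp
    have h1: "\<not> n dvd (c + int j * a + a)" using False by (simp add: algebra_simps)
    have h2: "\<not> n dvd (c + int j * a + 2*a)" using False by (simp add: algebra_simps)
    have "Suc j < 7" using j(1) by simp
    from Y[rule_format, OF this] obtain v w where vw: "v \<in> G (b mod n)" "w \<in> G ((a - b) mod n)"
      "ys ! Suc j = br v w" by blast
    have zj: "z (Suc (Suc j)) = br (br (z j) (ys ! j)) (ys ! Suc j)"
      using zS[of "Suc j"] zS[of j] j(1) by simp
    have i: "\<not> minus1_dependent n [c + int j * a, a, b, a - b]"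
      by (rule indep4) (use h0 h1 h2 f1 f2 f3 f4 oa nb in \<open>simp_all add: algebra_simps mod_eq_0_iff_dvd\<close>)
    have "br (br (z j) (ys ! j)) (br v w) = 0"
      by (rule sm_apply[OF SM i zdeg[of j] _ vw(1) vw(2)]) (use j(1) yG len in auto)
    then have "z (Suc (Suc j)) = 0" using zj vw(3) by simp
    moreover have "Suc (Suc j) \<le> 7" using j(1) by simp
    ultimately show ?thesis by blast
  qed
  then obtain t where "z t = 0" by blast
  then show ?thesis unfolding left_normed_def z_def by (rule fold_zero[OF L])
qed

theorem lemma2:
  fixes scale :: "'k::field \<Rightarrow> 'v::ab_group_add \<Rightarrow> 'v"
    and br :: "'v \<Rightarrow> 'v \<Rightarrow> 'v"
    and n :: int and G :: "int \<Rightarrow> 'v set"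
    and a b c :: int and x :: 'v and ys :: "'v list"
  assumes "odd n"
    and "graded_lie_algebra scale br n G"
    and "G 0 = {0}"
    and "selective_metabelian br n G"
    and "add_order n a > 3"
    and "x \<in> G (c mod n)"
    and "length ys = 7"
    and "\<forall>k<7. \<exists>v w. v \<in> G (b mod n) \<and> w \<in> G ((a - b) mod n) \<and> ys ! k = br v w"
  shows "left_normed br x ys = 0"
proof -
  have L: "lie_algebra scale br" by (rule gla_proj(1)[OF assms(2)])
  consider (z) "n dvd b \<or> n dvd (a - b)" | (s1) "n dvd (a + b)" | (s2) "n dvd (2*a - b)"
    | (g) "\<not> n dvd b" "\<not> n dvd (a - b)" "\<not> n dvd (a + b)" "\<not> n dvd (2*a - b)" by blast
  then show ?thesis
  proof cases
    case z
    have "0 < (7::nat)" by simp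
    from assms(8)[rule_format, OF this] obtain v w where vw: "v \<in> G (b mod n)" "w \<in> G ((a - b) mod n)"
      "ys ! 0 = br v w" by blast
    have "ys ! 0 = 0"
    proof (cases "n dvd b")
      case True
      then have "v = 0" using vw(1) assms(3) by (simp add: mod_eq_0_iff_dvd)
      then show ?thesis using vw(3) br_0L[OF L] by simp
    next
      case False
      then have "n dvd (a - b)" using z by blast
      then have "w = 0" using vw(2) assms(3) by (simp add: mod_eq_0_iff_dvd)
      then show ?thesis using vw(3) br_0R[OF L] by simp
    qed
    then have "foldl br x (take 1 ys) = 0" using assms(7) fold_Suc[of 0 ys br x] br_0R[OF L] by simp
    then show ?thesis unfolding left_normed_def by (rule fold_zero[OF L])
  next
    case s1
    show ?thesis by (rule special_case[OF assms(1-8) s1])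
  next
    case s2
    have Y': "\<forall>k<7. \<exists>v w. v \<in> G ((a - b) mod n) \<and> w \<in> G ((a - (a - b)) mod n) \<and> ys ! k = br v w"
    proof (intro allI impI)
      fix k :: nat assume "k < 7"
      from assms(8)[rule_format, OF this] obtain v w where vw: "v \<in> G (b mod n)" "w \<in> G ((a - b) mod n)"
        "ys ! k = br v w" by blast
      have "- w \<in> G ((a - b) mod n)" by (rule grad_neg[OF assms(2) vw(2)])
      moreover have "v \<in> G ((a - (a - b)) mod n)" using vw(1) by simp
      moreover have "ys ! k = br (- w) v"
        using vw(3) br_negL[OF L, of w v] br_anti[OF L, of w v] by simp
      ultimately show "\<exists>v w. v \<in> G ((a - b) mod n) \<and> w \<in> G ((a - (a - b)) mod n) \<and> ys ! k = br v w"
        by blast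
    qed
    have "n dvd (a + (a - b))" using s2 by (simp add: algebra_simps)
    show ?thesis by (rule special_case[OF assms(1-7) Y' \<open>n dvd (a + (a - b))\<close>])
  next
    case g
    show ?thesis by (rule generic_case[OF assms(1-8) g])
  qed
qed



end
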